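(* Let $T:{\mathcal{Q}Sym}\to{\mathcal{Q}Sym}$ be the linear map with $T(F_\alpha)=F_{\tilde\alpha}$ for every composition $\alpha$. Then \[\zeta_+\circ T=\zeta_+\quad\text{and}\quad \zeta_-\circ T=\bigl((\zeta^{-1})_-\bigr)^{-1}.\]
   Context: $\Bbbk$ is a field of characteristic $\neq2$. For a composition $\alpha=(a_1,\ldots,a_k)$, $\tilde\alpha=(a_k,\ldots,a_1)$ is its reversal. ${\mathcal{Q}Sym}$ is the graded connected Hopf algebra of quasi-symmetric functions over $\Bbbk$, with monomial basis $M_\alpha=\sum_{i_1<\cdots<i_k}x_{i_1}^{a_1}\cdots x_{i_k}^{a_k}$, fundamental basis $F_\alpha=\sum_{\beta\ge\alpha}M_\beta$ ($\beta\ge\alpha$: $\beta$ refines $\alpha$), ordinary product, coproduct $\Delta(M_\alpha)=\sum_{i=0}^kM_{(a_1,\ldots,a_i)}\otimes M_{(a_{i+1},\ldots,a_k)}$. Convolution $\rho\psi=m\circ(\rho\otimes\psi)\circ\Delta$; characters (algebra morphisms to $\Bbbk$) form a group under convolution, the inverse of $\varphi$ being denoted $\varphi^{-1}$. For a functional $\varphi$, $\bar\varphi(h)=(-1)^n\varphi(h)$ on homogeneous $h$ of degree $n$; $\varphi$ is even if $\bar\varphi=\varphi$ and odd if $\bar\varphi=\varphi^{-1}$. Every character $\varphi$ factors uniquely as $\varphi=\varphi_+\varphi_-$ with $\varphi_+$ an even character and $\varphi_-$ an odd character. $\zeta$ is the universal character $\zeta(f)=f(1,0,0,\ldots)$ (so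 $\zeta(F_\alpha)=1$ if $\alpha=()$ or $\alpha=(n)$, else $0$); $\zeta_\pm$ are its even and odd parts, and $(\zeta^{-1})_\pm$ are the even and odd parts of its convolution inverse $\zeta^{-1}$. *)

theory Defs
  imports Main "HOL-Library.Multiset"
begin

text \<open>A linear functional on QSym is
  represented by its values on the monomial basis: phi alpha stands for phi(M_alpha);
  by convention it is 0 on lists that are not compositions.\<close>

definition is_comp :: "nat list \<Rightarrow> bool" where
  "is_comp \<alpha> \<longleftrightarrow> (\<forall>a\<in>set \<alpha>. 0 < a)"

text \<open>Quasi-shuffle: M_alpha * M_beta = sum over gamma in qsh alpha beta of M_gamma.\<close>
fun qsh :: "nat list \<Rightarrow> nat list \<Rightarrow> nat list multiset" where
  "qsh [] v = {#v#}"
| "qsh u [] = {#u#}"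
| "qsh (a # u) (b # v) =
     image_mset (Cons a) (qsh u (b # v)) + image_mset (Cons b) (qsh (a # u) v)
     + image_mset (Cons (a + b)) (qsh u v)"

definition is_functional :: "(nat list \<Rightarrow> 'a::field) \<Rightarrow> bool" where
  "is_functional \<phi> \<longleftrightarrow> (\<forall>\<alpha>. \<not> is_comp \<alpha> \<longrightarrow> \<phi> \<alpha> = 0)"

text \<open>Convolution via the deconcatenation coproduct.\<close>
definition conv :: "(nat list \<Rightarrow> 'a::field) \<Rightarrow> (nat list \<Rightarrow> 'a) \<Rightarrow> nat list \<Rightarrow> 'a" where
  "conv \<rho> \<psi> \<alpha> = (if is_comp \<alpha> then (\<Sum>i\<le>length \<alpha>. \<rho> (take i \<alpha>) * \<psi> (drop i \<alpha>)) else 0)"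

definition counit :: "nat list \<Rightarrow> 'a::field" where
  "counit \<alpha> = (if \<alpha> = [] then 1 else 0)"

definition is_character :: "(nat list \<Rightarrow> 'a::field) \<Rightarrow> bool" where
  "is_character \<phi> \<longleftrightarrow> is_functional \<phi> \<and> \<phi> [] = 1 \<and>
     (\<forall>\<alpha> \<beta>. is_comp \<alpha> \<longrightarrow> is_comp \<beta> \<longrightarrow> \<phi> \<alpha> * \<phi> \<beta> = (\<Sum>\<gamma>\<in>#qsh \<alpha> \<beta>. \<phi> \<gamma>))"

definition char_inv :: "(nat list \<Rightarrow> 'a::field) \<Rightarrow> nat list \<Rightarrow> 'a" where
  "char_inv \<phi> = (THE \<psi>. is_character \<psi> \<and> conv \<phi> \<psi> = counit \<and> conv \<psi> \<phi> = counit)"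

text \<open>bar phi (h) = (-1)^n phi(h) on homogeneous h of degree n; M_alpha has degree |alpha|.\<close>
definition bar :: "(nat list \<Rightarrow> 'a::field) \<Rightarrow> nat list \<Rightarrow> 'a" where
  "bar \<phi> \<alpha> = (-1) ^ sum_list \<alpha> * \<phi> \<alpha>"

definition is_even :: "(nat list \<Rightarrow> 'a::field) \<Rightarrow> bool" where
  "is_even \<phi> \<longleftrightarrow> bar \<phi> = \<phi>"

definition is_odd :: "(nat list \<Rightarrow> 'a::field) \<Rightarrow> bool" where
  "is_odd \<phi> \<longleftrightarrow> bar \<phi> = char_inv \<phi>"

definition even_part :: "(nat list \<Rightarrow> 'a::field) \<Rightarrow> nat list \<Rightarrow> 'a" where
  "even_part \<phi> = (THE p. is_character p \<and> is_even p \<and>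
      (\<exists>m. is_character m \<and> is_odd m \<and> \<phi> = conv p m))"

definition odd_part :: "(nat list \<Rightarrow> 'a::field) \<Rightarrow> nat list \<Rightarrow> 'a" where
  "odd_part \<phi> = (THE m. is_character m \<and> is_odd m \<and>
      (\<exists>p. is_character p \<and> is_even p \<and> \<phi> = conv p m))"

text \<open>Universal character zeta(f) = f(1,0,0,...): zeta(M_alpha) = 1 iff alpha has at most one part.\<close>
definition zeta :: "nat list \<Rightarrow> 'a::field" where
  "zeta \<alpha> = (if is_comp \<alpha> \<and> length \<alpha> \<le> 1 then 1 else 0)"

definition psums :: "nat list \<Rightarrow> nat set" where
  "psums \<alpha> = {sum_list (take i \<alpha>) | i. i \<le> length \<alpha>}"

definition refines :: "nat list \<Rightarrow> nat list \<Rightarrow> bool" where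
  "refines \<beta> \<alpha> \<longleftrightarrow> sum_list \<beta> = sum_list \<alpha> \<and> psums \<alpha> \<subseteq> psums \<beta>"

text \<open>Value of a functional on the fundamental basis element F_alpha = sum_{beta \<ge> alpha} M_beta.\<close>
definition evalF :: "(nat list \<Rightarrow> 'a::field) \<Rightarrow> nat list \<Rightarrow> 'a" where
  "evalF \<phi> \<alpha> = (\<Sum>\<beta>\<in>{\<beta>. is_comp \<beta> \<and> refines \<beta> \<alpha>}. \<phi> \<beta>)"

end

theory Submission
  imports Defs
begin

lemma is_comp_simps[simp]:
  "is_comp []" "is_comp (a#u) \<longleftrightarrow> 0 < a \<and> is_comp u"
  "is_comp (u@v) \<longleftrightarrow> is_comp u \<and> is_comp v" "is_comp (rev u) \<longleftrightarrow> is_comp u"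
  by (auto simp: is_comp_def)

lemma is_comp_take[simp]: "is_comp u \<Longrightarrow> is_comp (take i u)"
  and is_comp_drop[simp]: "is_comp u \<Longrightarrow> is_comp (drop i u)"
  by (auto simp: is_comp_def dest: in_set_takeD in_set_dropD)

lemma qsh_Nil2[simp]: "qsh u [] = {#u#}"
  by (cases u) auto

lemma qsh_comp: "is_comp u \<Longrightarrow> is_comp v \<Longrightarrow> \<gamma> \<in># qsh u v \<Longrightarrow> is_comp \<gamma>"
proof (induction u v arbitrary: \<gamma> rule: qsh.induct)
  case (1 v)
  then show ?case by simp
next
  case (2 a u)
  then show ?case by simp
next
  case (3 a u b v)
  note prems = 3(4-6)
  from prems(3) consider (A) x where "x \<in># qsh u (b#v)" "\<gamma> = a#x"
    | (B) x where "x \<in># qsh (a#u) v" "\<gamma> = b#x"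
    | (C) x where "x \<in># qsh u v" "\<gamma> = (a+b)#x"
    unfolding qsh.simps union_iff in_image_mset by blast
  then show ?case
  proof cases
    case A then show ?thesis using 3(1)[of x] prems by simp
  next
    case B then show ?thesis using 3(2)[of x] prems by simp
  next
    case C then show ?thesis using 3(3)[of x] prems by simp
  qed
qed

lemma qsh_sum: "\<gamma> \<in># qsh u v \<Longrightarrow> sum_list \<gamma> = sum_list u + sum_list v"
proof (induction u v arbitrary: \<gamma> rule: qsh.induct)
  case (1 v)
  then show ?case by simp
next
  case (2 a u)
  then show ?case by simp
next
  case (3 a u b v)
  from 3(4) consider (A) x where "x \<in># qsh u (b#v)" "\<gamma> = a#x"
    | (B) x where "x \<in># qsh (a#u) v" "\<gamma> = b#x"
    | (C) x where "x \<in># qsh u v" "\<gamma> = (a+b)#x"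
    unfolding qsh.simps union_iff in_image_mset by blast
  then show ?case
  proof cases
    case A then show ?thesis using 3(1)[of x] by simp
  next
    case B then show ?thesis using 3(2)[of x] by simp
  next
    case C then show ?thesis using 3(3)[of x] by simp
  qed
qed

lemma counit_Cons[simp]: "counit (a#x) = 0"
  by (simp add: counit_def)

lemma counit_Nil[simp]: "counit [] = 1"
  by (simp add: counit_def)

lemma sum_counit_image_Cons[simp]: "(\<Sum>x\<in>#image_mset (Cons c) X. (counit x::'a::field)) = 0"
  by (induction X) simp_all

lemma qsh_counit: "(\<Sum>\<gamma>\<in>#qsh u v. (counit \<gamma> :: 'a::field)) = counit u * counit v"
proof (induction u v rule: qsh.induct)
  case (1 v)
  then show ?case by (simp add: counit_def)
next
  case (2 a u)
  then show ?case by simp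
next
  case (3 a u b v)
  show ?case by (simp only: qsh.simps sum_mset.union image_mset_union sum_counit_image_Cons) simp
qed

lemma sum_mset_img: "(\<Sum>\<gamma>\<in>#image_mset h X. g \<gamma>) = (\<Sum>x\<in>#X. g (h x))"
  by (simp add: multiset.map_comp comp_def)

lemma split_Cons:
  "(\<Sum>i\<le>length (c#x). f (take i (c#x)) (drop i (c#x)))
     = f [] (c#x) + (\<Sum>i\<le>length x. f (c # take i x) (drop i x))"
  by (simp only: length_Cons sum.atMost_Suc_shift) simp

lemma qsh_split:
  "(\<Sum>\<gamma>\<in>#qsh u v. \<Sum>i\<le>length \<gamma>. f (take i \<gamma>) (drop i \<gamma>) :: 'a::comm_monoid_add)
   = (\<Sum>j\<le>length u. \<Sum>k\<le>length v. \<Sum>x\<in>#qsh (take j u) (take k v).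
        \<Sum>y\<in>#qsh (drop j u) (drop k v). f x y)"
proof (induction u v arbitrary: f rule: qsh.induct)
  case (1 v)
  then show ?case by simp
next
  case (2 a u)
  then show ?case by simp
next
  case (3 a u b v)
  define U where "U = a#u"
  define V where "V = b#v"
  define T where "T j k = (\<Sum>x\<in>#qsh (take j U) (take k V). \<Sum>y\<in>#qsh (drop j U) (drop k V). f x y)" for j k
  define A where "A j k = (\<Sum>x\<in>#qsh (take j u) (b#take k v). \<Sum>y\<in>#qsh (drop j u) (drop k v). f (a#x) y)" for j k
  define B where "B j k = (\<Sum>x\<in>#qsh (a#take j u) (take k v). \<Sum>y\<in>#qsh (drop j u) (drop k v). f (b#x) y)" for j k
  define C where "C j k = (\<Sum>x\<in>#qsh (take j u) (take k v). \<Sum>y\<in>#qsh (drop j u) (drop k v). f ((a+b)#x) y)" for j k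
  define L where "L c X = (\<Sum>x\<in>#X. \<Sum>i\<le>length x. f (c # take i x) (drop i x))" for c X
  have T0: "T 0 0 = (\<Sum>x\<in>#qsh u V. f [] (a#x)) + (\<Sum>x\<in>#qsh U v. f [] (b#x)) + (\<Sum>x\<in>#qsh u v. f [] ((a+b)#x))"
    unfolding T_def U_def V_def by (simp add: multiset.map_comp comp_def)
  have T0S: "T 0 (Suc k) = (\<Sum>y\<in>#qsh U (drop k v). f (b#take k v) y)" for k
    unfolding T_def U_def V_def by simp
  have TS0: "T (Suc j) 0 = (\<Sum>y\<in>#qsh (drop j u) V. f (a#take j u) y)" for j
    unfolding T_def U_def V_def by simp
  have TSS: "T (Suc j) (Suc k) = A j k + B j k + C j k" for j k
    unfolding T_def U_def V_def A_def B_def C_def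
    by (simp add: sum_mset.distrib multiset.map_comp comp_def)
  have RHS: "(\<Sum>j\<le>length U. \<Sum>k\<le>length V. T j k)
     = T 0 0 + (\<Sum>k\<le>length v. T 0 (Suc k)) + (\<Sum>j\<le>length u. T (Suc j) 0)
       + (\<Sum>j\<le>length u. \<Sum>k\<le>length v. A j k) + (\<Sum>j\<le>length u. \<Sum>k\<le>length v. B j k)
       + (\<Sum>j\<le>length u. \<Sum>k\<le>length v. C j k)"
    unfolding U_def V_def length_Cons sum.atMost_Suc_shift TSS sum.distrib
    by (simp only: add_ac)
  have IH1: "L a (qsh u V) = (\<Sum>j\<le>length u. T (Suc j) 0) + (\<Sum>j\<le>length u. \<Sum>k\<le>length v. A j k)"
    unfolding L_def V_def 3(1)[of "\<lambda>x y. f (a#x) y"] length_Cons sum.atMost_Suc_shift TS0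
    by (simp add: A_def V_def sum.distrib del: sum.atMost_Suc)
  have IH2: "L b (qsh U v) = (\<Sum>k\<le>length v. T 0 (Suc k)) + (\<Sum>j\<le>length u. \<Sum>k\<le>length v. B j k)"
    unfolding L_def U_def 3(2)[of "\<lambda>x y. f (b#x) y"] length_Cons sum.atMost_Suc_shift T0S
    by (simp add: B_def U_def sum.distrib del: sum.atMost_Suc)
  have IH3: "L (a+b) (qsh u v) = (\<Sum>j\<le>length u. \<Sum>k\<le>length v. C j k)"
    unfolding L_def 3(3)[of "\<lambda>x y. f ((a+b)#x) y"] C_def by simp
  have LHS: "(\<Sum>\<gamma>\<in>#qsh U V. \<Sum>i\<le>length \<gamma>. f (take i \<gamma>) (drop i \<gamma>))
     = T 0 0 + L a (qsh u V) + L b (qsh U v) + L (a+b) (qsh u v)"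
    unfolding T0 L_def U_def V_def qsh.simps image_mset_union sum_mset.union sum_mset_img split_Cons sum_mset.distrib
    by (simp only: add_ac)
  show ?case
    using LHS RHS IH1 IH2 IH3 unfolding T_def U_def V_def by (simp add: add_ac)
qed

lemma qsh_comm: "qsh u v = qsh v u"
  by (induction u v rule: qsh.induct) (auto simp: add_ac)

lemma qsh_single_snoc:
  "qsh [a] (v@[b]) = image_mset (\<lambda>\<gamma>. \<gamma>@[a]) (qsh [] (v@[b]))
     + image_mset (\<lambda>\<gamma>. \<gamma>@[b]) (qsh [a] v) + image_mset (\<lambda>\<gamma>. \<gamma>@[a+b]) (qsh [] v)"
proof (induction v)
  case Nil
  then show ?case by (simp add: add_ac)
next
  case (Cons c w)
  show ?case
    by (simp add: Cons multiset.map_comp comp_def add_ac)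
qed

lemma qsh_snoc:
  "qsh (u@[a]) (v@[b]) = image_mset (\<lambda>\<gamma>. \<gamma>@[a]) (qsh u (v@[b]))
     + image_mset (\<lambda>\<gamma>. \<gamma>@[b]) (qsh (u@[a]) v) + image_mset (\<lambda>\<gamma>. \<gamma>@[a+b]) (qsh u v)"
proof (induction u v rule: qsh.induct)
  case (1 v)
  then show ?case using qsh_single_snoc by simp
next
  case (2 c u)
  have "qsh ((c#u)@[a]) [b] = qsh [b] ((c#u)@[a])" by (rule qsh_comm)
  also have "\<dots> = image_mset (\<lambda>\<gamma>. \<gamma>@[b]) (qsh [] ((c#u)@[a]))
     + image_mset (\<lambda>\<gamma>. \<gamma>@[a]) (qsh [b] (c#u)) + image_mset (\<lambda>\<gamma>. \<gamma>@[b+a]) (qsh [] (c#u))"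
    by (rule qsh_single_snoc)
  also have "\<dots> = image_mset (\<lambda>\<gamma>. \<gamma>@[a]) (qsh (c#u) ([]@[b]))
     + image_mset (\<lambda>\<gamma>. \<gamma>@[b]) (qsh ((c#u)@[a]) []) + image_mset (\<lambda>\<gamma>. \<gamma>@[a+b]) (qsh (c#u) [])"
    using qsh_comm[of "[b]" "c#u"] by (simp add: add_ac)
  finally show ?case by simp
next
  case (3 c u d v)
  show ?case
    using 3 by (simp add: multiset.map_comp comp_def add_ac)
qed

lemma qsh_rev: "qsh (rev u) (rev v) = image_mset rev (qsh u v)"
proof (induction u v rule: qsh.induct)
  case (1 v)
  then show ?case by simp
next
  case (2 a u)
  then show ?case by simp
next
  case (3 a u b v)
  show ?case
    using 3 by (simp add: qsh_snoc multiset.map_comp comp_def)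
qed


lemma conv_nc[simp]: "\<not> is_comp \<alpha> \<Longrightarrow> conv a b \<alpha> = 0"
  by (simp add: conv_def)

lemma counit_nc: "\<not> is_comp \<alpha> \<Longrightarrow> counit \<alpha> = 0"
  by (cases \<alpha>) (auto simp: counit_def)

lemma functional_conv[simp]: "is_functional (conv a b)"
  by (simp add: is_functional_def)

lemma functional_counit[simp]: "is_functional counit"
  by (simp add: is_functional_def counit_nc)

lemma functional_nc: "is_functional \<phi> \<Longrightarrow> \<not> is_comp \<alpha> \<Longrightarrow> \<phi> \<alpha> = 0"
  by (simp add: is_functional_def)

lemma tri_sum: "(\<Sum>i\<le>(n::nat). \<Sum>j\<le>i. g i j) = (\<Sum>j\<le>n. \<Sum>k\<le>n-j. g (j+k) j :: 'a::comm_monoid_add)"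
proof -
  have "(\<Sum>i\<le>n. \<Sum>j\<le>i. g i j) = (\<Sum>(i,j)\<in>(SIGMA i:{..n}. {..i}). g i j)"
    by (rule sum.Sigma) auto
  also have "\<dots> = (\<Sum>(j,k)\<in>(SIGMA j:{..n}. {..n-j}). g (j+k) j)"
    by (rule sum.reindex_bij_witness[where i="\<lambda>(j,k). (j+k,j)" and j="\<lambda>(i,j). (j,i-j)"]) auto
  also have "\<dots> = (\<Sum>j\<le>n. \<Sum>k\<le>n-j. g (j+k) j)"
    by (rule sum.Sigma[symmetric]) auto
  finally show ?thesis .
qed

lemma conv_assoc: "conv (conv a b) c = conv a (conv b c)"
proof
  fix \<alpha> :: "nat list"
  show "conv (conv a b) c \<alpha> = conv a (conv b c) \<alpha>"
  proof (cases "is_comp \<alpha>")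
    case False
    then show ?thesis by simp
  next
    case True
    define n where "n = length \<alpha>"
    define g where "g i j = a (take j \<alpha>) * b (drop j (take i \<alpha>)) * c (drop i \<alpha>)" for i j
    have s1: "conv a b (take i \<alpha>) * c (drop i \<alpha>) = (\<Sum>j\<le>i. g i j)" if i: "i \<le> n" for i
    proof -
      have len: "length (take i \<alpha>) = i" using i by (simp add: n_def)
      have "conv a b (take i \<alpha>) = (\<Sum>j\<le>i. a (take j \<alpha>) * b (drop j (take i \<alpha>)))"
        unfolding conv_def using True len by (simp add: min_def)
      then show ?thesis by (simp add: g_def sum_distrib_right)
    qed
    have s2: "a (take j \<alpha>) * conv b c (drop j \<alpha>) = (\<Sum>k\<le>n-j. g (j+k) j)" if j: "j \<le> n" for j
    proof -
      have "conv b c (drop j \<alpha>) = (\<Sum>k\<le>n-j. b (take k (drop j \<alpha>)) * c (drop k (drop j \<alpha>)))"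
        unfolding conv_def using True by (simp add: n_def)
      then show ?thesis by (simp add: g_def sum_distrib_left mult.assoc take_drop add.commute)
    qed
    have "conv (conv a b) c \<alpha> = (\<Sum>i\<le>n. \<Sum>j\<le>i. g i j)"
      unfolding conv_def[of "conv a b"] using True s1 by (simp add: n_def)
    also have "\<dots> = (\<Sum>j\<le>n. \<Sum>k\<le>n-j. g (j+k) j)"
      by (rule tri_sum)
    also have "\<dots> = conv a (conv b c) \<alpha>"
      unfolding conv_def[of a] using True s2 by (simp add: n_def)
    finally show ?thesis .
  qed
qed

lemma conv_counit_left: assumes "is_functional a" shows "conv counit a = a"
proof
  fix \<alpha> :: "nat list"
  show "conv counit a \<alpha> = a \<alpha>"
  proof (cases "is_comp \<alpha>")
    case False
    then show ?thesis using assms by (simp add: functional_nc)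
  next
    case True
    have "conv counit a \<alpha> = (\<Sum>i\<le>length \<alpha>. counit (take i \<alpha>) * a (drop i \<alpha>))"
      unfolding conv_def using True by simp
    also have "\<dots> = (\<Sum>i\<le>length \<alpha>. if i = 0 then a \<alpha> else 0)"
    proof (rule sum.cong)
      fix i assume i: "i \<in> {..length \<alpha>}"
      show "counit (take i \<alpha>) * a (drop i \<alpha>) = (if i = 0 then a \<alpha> else 0)"
      proof (cases i)
        case 0 then show ?thesis by simp
      next
        case (Suc k)
        then have "take i \<alpha> \<noteq> []" using i by (cases \<alpha>) auto
        then show ?thesis using Suc by (simp add: counit_def)
      qed
    qed simp
    also have "\<dots> = a \<alpha>" by (simp add: sum.delta)
    finally show ?thesis .
  qed
qed

lemma conv_counit_right: assumes "is_functional a" shows "conv a counit = a"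
proof
  fix \<alpha> :: "nat list"
  show "conv a counit \<alpha> = a \<alpha>"
  proof (cases "is_comp \<alpha>")
    case False
    then show ?thesis using assms by (simp add: functional_nc)
  next
    case True
    have "conv a counit \<alpha> = (\<Sum>i\<le>length \<alpha>. a (take i \<alpha>) * counit (drop i \<alpha>))"
      unfolding conv_def using True by simp
    also have "\<dots> = (\<Sum>i\<le>length \<alpha>. if i = length \<alpha> then a \<alpha> else 0)"
    proof (rule sum.cong)
      fix i assume i: "i \<in> {..length \<alpha>}"
      show "a (take i \<alpha>) * counit (drop i \<alpha>) = (if i = length \<alpha> then a \<alpha> else 0)"
      proof (cases "i = length \<alpha>")
        case True then show ?thesis by simp
      next
        case False
        then have "drop i \<alpha> \<noteq> []" using i by auto
        then show ?thesis using False by (simp add: counit_def)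
      qed
    qed simp
    also have "\<dots> = a \<alpha>" by (simp add: sum.delta)
    finally show ?thesis .
  qed
qed

lemma fix_exists:
  fixes H :: "('b \<Rightarrow> 'c) \<Rightarrow> 'b \<Rightarrow> 'c" and s :: "'b \<Rightarrow> nat"
  assumes "\<And>f g x. (\<And>y. s y < s x \<Longrightarrow> f y = g y) \<Longrightarrow> H f x = H g x"
  shows "\<exists>\<psi>. \<forall>x. \<psi> x = H \<psi> x"
proof -
  have wf: "wf (measure s)" by simp
  have adm: "adm_wf (measure s) H"
    unfolding adm_wf_def
  proof (intro allI impI)
    fix f g :: "'b \<Rightarrow> 'c" and x :: 'b assume "\<forall>z. (z, x) \<in> measure s \<longrightarrow> f z = g z"
    then show "H f x = H g x" by (intro assms) simp
  qed
  have fx: "wfrec (measure s) H = H (wfrec (measure s) H)"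
    by (rule wfrec_fixpoint[OF wf adm])
  show ?thesis
  proof (rule exI[where x="wfrec (measure s) H"], rule allI)
    fix x
    show "wfrec (measure s) H x = H (wfrec (measure s) H) x"
      using fun_cong[OF fx, of x] .
  qed
qed

definition conv2 :: "(nat list \<Rightarrow> nat list \<Rightarrow> 'a::field) \<Rightarrow> (nat list \<Rightarrow> nat list \<Rightarrow> 'a) \<Rightarrow> nat list \<Rightarrow> nat list \<Rightarrow> 'a" where
  "conv2 X Y u v = (\<Sum>j\<le>length u. \<Sum>k\<le>length v. X (take j u) (take k v) * Y (drop j u) (drop k v))"

definition Mx :: "(nat list \<Rightarrow> 'a::field) \<Rightarrow> nat list \<Rightarrow> nat list \<Rightarrow> 'a" where
  "Mx \<phi> u v = (\<Sum>\<gamma>\<in>#qsh u v. \<phi> \<gamma>)"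

definition tens :: "(nat list \<Rightarrow> 'a::field) \<Rightarrow> (nat list \<Rightarrow> 'a) \<Rightarrow> nat list \<Rightarrow> nat list \<Rightarrow> 'a" where
  "tens a b u v = a u * b v"

lemma sum_mset_mult: "(\<Sum>x\<in>#X. a x) * (\<Sum>y\<in>#Y. b y) = (\<Sum>x\<in>#X. \<Sum>y\<in>#Y. a x * b y :: 'a::field)"
  by (simp only: sum_mset_distrib_right) (simp only: sum_mset_distrib_left)

lemma M_conv:
  assumes "is_comp u" "is_comp v"
  shows "Mx (conv a b) u v = conv2 (Mx a) (Mx b) u v"
proof -
  have "Mx (conv a b) u v = (\<Sum>\<gamma>\<in>#qsh u v. \<Sum>i\<le>length \<gamma>. a (take i \<gamma>) * b (drop i \<gamma>))"
    unfolding Mx_def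
    by (rule arg_cong[where f=sum_mset], rule image_mset_cong) (simp add: conv_def qsh_comp[OF assms])
  also have "\<dots> = (\<Sum>j\<le>length u. \<Sum>k\<le>length v. \<Sum>x\<in>#qsh (take j u) (take k v).
        \<Sum>y\<in>#qsh (drop j u) (drop k v). a x * b y)"
    by (rule qsh_split)
  also have "\<dots> = conv2 (Mx a) (Mx b) u v"
    unfolding conv2_def Mx_def sum_mset_mult ..
  finally show ?thesis .
qed

lemma tens_conv:
  assumes "is_comp u" "is_comp v"
  shows "conv2 (tens a b) (tens c d) u v = conv a c u * conv b d v"
proof -
  have "conv a c u * conv b d v = (\<Sum>j\<le>length u. a (take j u) * c (drop j u)) * (\<Sum>k\<le>length v. b (take k v) * d (drop k v))"
    using assms by (simp add: conv_def)
  also have "\<dots> = (\<Sum>j\<le>length u. \<Sum>k\<le>length v. (a (take j u) * c (drop j u)) * (b (take k v) * d (drop k v)))"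
    by (rule sum_product)
  also have "\<dots> = conv2 (tens a b) (tens c d) u v"
    unfolding conv2_def tens_def by (intro sum.cong refl) (simp add: mult_ac)
  finally show ?thesis by simp
qed

lemma conv2_cong:
  assumes "\<And>x y. is_comp x \<Longrightarrow> is_comp y \<Longrightarrow> X x y = X' x y"
    and "\<And>x y. is_comp x \<Longrightarrow> is_comp y \<Longrightarrow> Y x y = Y' x y"
    and "is_comp u" "is_comp v"
  shows "conv2 X Y u v = conv2 X' Y' u v"
  unfolding conv2_def using assms by (intro sum.cong refl) simp

lemma Mx_char: "is_character \<phi> \<Longrightarrow> is_comp u \<Longrightarrow> is_comp v \<Longrightarrow> Mx \<phi> u v = tens \<phi> \<phi> u v"
  by (simp add: is_character_def Mx_def tens_def)

lemma delta2: "(\<Sum>j\<le>(n::nat). \<Sum>k\<le>(m::nat). if j = a then (if k = b then c else 0) else 0) = (if a \<le> n \<and> b \<le> m then c else (0::'a::comm_monoid_add))"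
proof -
  have inner: "(\<Sum>k\<le>m. if j = a then (if k = b then c else 0) else 0) = (if j = a then (if b \<le> m then c else 0) else 0)" for j
    by (cases "j = a") simp_all
  show ?thesis unfolding inner by simp
qed

lemma conv2_linv_unique:
  fixes P Q Y :: "nat list \<Rightarrow> nat list \<Rightarrow> 'a::field"
  assumes Y1: "Y [] [] = 1"
    and eq: "\<And>u v. is_comp u \<Longrightarrow> is_comp v \<Longrightarrow> conv2 P Y u v = conv2 Q Y u v"
  shows "is_comp u \<Longrightarrow> is_comp v \<Longrightarrow> P u v = Q u v"
proof (induction "length u + length v" arbitrary: u v rule: less_induct)
  case less
  define n where "n = length u"
  define m where "m = length v"
  have "conv2 P Y u v - conv2 Q Y u v
     = (\<Sum>j\<le>n. \<Sum>k\<le>m. (P (take j u) (take k v) - Q (take j u) (take k v)) * Y (drop j u) (drop k v))"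
    unfolding conv2_def n_def m_def by (simp only: sum_subtractf[symmetric] left_diff_distrib)
  also have "\<dots> = (\<Sum>j\<le>n. \<Sum>k\<le>m. if j = n then (if k = m then P u v - Q u v else 0) else 0)"
  proof (intro sum.cong refl)
    fix j k assume j: "j \<in> {..n}" and k: "k \<in> {..m}"
    show "(P (take j u) (take k v) - Q (take j u) (take k v)) * Y (drop j u) (drop k v)
       = (if j = n then (if k = m then P u v - Q u v else 0) else 0)"
    proof (cases "j = n \<and> k = m")
      case True
      then show ?thesis using Y1 by (simp add: n_def m_def)
    next
      case False
      have jk: "j \<le> n" "k \<le> m" using j k by simp_all
      have "j + k < n + m" using jk False by (cases "j = n") simp_all
      then have "length (take j u) + length (take k v) < length u + length v"
        using jk by (simp add: n_def m_def)
      then have "P (take j u) (take k v) = Q (take j u) (take k v)"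
        by (rule less.hyps) (simp_all add: less.prems)
      then show ?thesis using False by auto
    qed
  qed
  also have "\<dots> = P u v - Q u v" unfolding delta2 by simp
  finally show ?case using eq[OF less.prems] by simp
qed

lemma sqrt_term:
  fixes P Q :: "nat list \<Rightarrow> nat list \<Rightarrow> 'a::field"
  assumes P: "P [] [] = 1" and Q: "Q [] [] = 1"
    and nz: "\<not> (length u = 0 \<and> length v = 0)"
    and IH: "\<And>u' v'. length u' + length v' < length u + length v \<Longrightarrow> is_comp u' \<Longrightarrow> is_comp v' \<Longrightarrow> P u' v' = Q u' v'"
    and cu: "is_comp u" and cv: "is_comp v"
    and jk: "j \<le> length u" "k \<le> length v"
  shows "P (take j u) (take k v) * P (drop j u) (drop k v)
             - Q (take j u) (take k v) * Q (drop j u) (drop k v)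
         = (if j = 0 then (if k = 0 then P u v - Q u v else 0) else 0)
                        + (if j = length u then (if k = length v then P u v - Q u v else 0) else 0)"
proof (cases "j = 0 \<and> k = 0")
  case True
  have jz: "j = 0" "k = 0" using True by simp_all
  have r2: "(if j = length u then (if k = length v then P u v - Q u v else 0) else 0) = 0"
    using nz jz by auto
  show ?thesis unfolding r2 using P Q jz by simp
next
  case F0: False
  show ?thesis
  proof (cases "j = length u \<and> k = length v")
    case True
    have r1: "(if j = 0 then (if k = 0 then P u v - Q u v else 0) else 0) = 0"
      using F0 by (cases "j = 0") simp_all
    show ?thesis unfolding r1 using P Q True by simp
  next
    case False
    have "j + k < length u + length v" using jk False by (cases "j = length u") simp_all
    then have "length (take j u) + length (take k v) < length u + length v"
      using jk by simp
    then have A: "P (take j u) (take k v) = Q (take j u) (take k v)"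
      by (rule IH) (simp_all add: cu cv)
    have "0 < j + k" using F0 by (cases "j = 0") simp_all
    then have "length (drop j u) + length (drop k v) < length u + length v"
      using jk by simp arith
    then have B: "P (drop j u) (drop k v) = Q (drop j u) (drop k v)"
      by (rule IH) (simp_all add: cu cv)
    have r1: "(if j = 0 then (if k = 0 then P u v - Q u v else 0) else 0) = 0"
      using F0 by (cases "j = 0") simp_all
    have r2: "(if j = length u then (if k = length v then P u v - Q u v else 0) else 0) = 0"
      using False by (cases "j = length u") simp_all
    show ?thesis unfolding r1 r2 A B by simp
  qed
qed

lemma sqrt_step:
  fixes P Q :: "nat list \<Rightarrow> nat list \<Rightarrow> 'a::field"
  assumes two: "(2::'a) \<noteq> 0" and P: "P [] [] = 1" and Q: "Q [] [] = 1"
    and nz: "\<not> (length u = 0 \<and> length v = 0)"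
    and IH: "\<And>u' v'. length u' + length v' < length u + length v \<Longrightarrow> is_comp u' \<Longrightarrow> is_comp v' \<Longrightarrow> P u' v' = Q u' v'"
    and cu: "is_comp u" and cv: "is_comp v"
    and eq: "conv2 P P u v = conv2 Q Q u v"
  shows "P u v = Q u v"
proof -
  define d where "d = P u v - Q u v"
  have "conv2 P P u v - conv2 Q Q u v
     = (\<Sum>j\<le>length u. \<Sum>k\<le>length v. P (take j u) (take k v) * P (drop j u) (drop k v)
           - Q (take j u) (take k v) * Q (drop j u) (drop k v))"
    unfolding conv2_def by (simp only: sum_subtractf[symmetric])
  also have "\<dots> = (\<Sum>j\<le>length u. \<Sum>k\<le>length v. (if j = 0 then (if k = 0 then d else 0) else 0)
                      + (if j = length u then (if k = length v then d else 0) else 0))"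
  proof (rule sum.cong[OF refl], rule sum.cong[OF refl])
    fix j k assume j: "j \<in> {..length u}" and k: "k \<in> {..length v}"
    have "j \<le> length u" "k \<le> length v" using j k by simp_all
    from sqrt_term[where P=P and Q=Q and u=u and v=v, OF P Q nz IH cu cv this]
    show "P (take j u) (take k v) * P (drop j u) (drop k v)
           - Q (take j u) (take k v) * Q (drop j u) (drop k v) =
       (if j = 0 then (if k = 0 then d else 0) else 0)
                      + (if j = length u then (if k = length v then d else 0) else 0)"
      unfolding d_def .
  qed
  also have "\<dots> = d + d"
    unfolding sum.distrib delta2 by simp
  finally have "d + d = 0" using eq by simp
  then have "2 * d = 0" by (simp only: mult_2)
  then have "d = 0" using two by simp
  then show ?thesis by (simp add: d_def)
qed

lemma conv2_sqrt_unique: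
  fixes P Q :: "nat list \<Rightarrow> nat list \<Rightarrow> 'a::field"
  assumes two: "(2::'a) \<noteq> 0" and P: "P [] [] = 1" and Q: "Q [] [] = 1"
    and eq: "\<And>u v. is_comp u \<Longrightarrow> is_comp v \<Longrightarrow> conv2 P P u v = conv2 Q Q u v"
  shows "is_comp u \<Longrightarrow> is_comp v \<Longrightarrow> P u v = Q u v"
proof (induction "length u + length v" arbitrary: u v rule: less_induct)
  case less
  show ?case
  proof (cases "length u = 0 \<and> length v = 0")
    case True
    then show ?thesis using P Q by simp
  next
    case False
    show ?thesis
      by (rule sqrt_step[OF two P Q False less.hyps less.prems eq[OF less.prems]])
  qed
qed


lemma char_functional: "is_character \<phi> \<Longrightarrow> is_functional \<phi>"
  by (simp add: is_character_def)

lemma char_Nil: "is_character \<phi> \<Longrightarrow> \<phi> [] = 1"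
  by (simp add: is_character_def)

lemma conv_Nil: "conv a b [] = a [] * b []"
  by (simp add: conv_def)

lemma Mx_Nil: "Mx \<phi> [] [] = \<phi> []"
  by (simp add: Mx_def)

lemma char_conv:
  assumes a: "is_character a" and b: "is_character b"
  shows "is_character (conv a b)"
proof -
  have "conv a b \<alpha> * conv a b \<beta> = (\<Sum>\<gamma>\<in>#qsh \<alpha> \<beta>. conv a b \<gamma>)"
    if ab: "is_comp \<alpha>" "is_comp \<beta>" for \<alpha> \<beta>
  proof -
    have "(\<Sum>\<gamma>\<in>#qsh \<alpha> \<beta>. conv a b \<gamma>) = Mx (conv a b) \<alpha> \<beta>" by (simp add: Mx_def)
    also have "\<dots> = conv2 (Mx a) (Mx b) \<alpha> \<beta>" using ab by (rule M_conv)
    also have "\<dots> = conv2 (tens a a) (tens b b) \<alpha> \<beta>"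
      by (rule conv2_cong) (simp_all add: Mx_char[OF a] Mx_char[OF b] ab)
    also have "\<dots> = conv a b \<alpha> * conv a b \<beta>" using ab by (rule tens_conv)
    finally show ?thesis by simp
  qed
  then show ?thesis using char_Nil[OF a] char_Nil[OF b]
    by (simp add: is_character_def conv_Nil)
qed

lemma linv_exists:
  fixes \<phi> :: "nat list \<Rightarrow> 'a::field"
  assumes "\<phi> [] = 1"
  shows "\<exists>\<psi>. is_functional \<psi> \<and> conv \<psi> \<phi> = counit"
proof -
  define H where "H \<psi> \<alpha> = (if is_comp \<alpha> then (if \<alpha> = [] then 1
      else - (\<Sum>i<length \<alpha>. \<psi> (take i \<alpha>) * \<phi> (drop i \<alpha>))) else 0)"
    for \<psi> :: "nat list \<Rightarrow> 'a" and \<alpha>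
  have "\<exists>\<psi>. \<forall>\<alpha>. \<psi> \<alpha> = H \<psi> \<alpha>"
  proof (rule fix_exists[where s=length])
    fix f g :: "nat list \<Rightarrow> 'a" and \<alpha> :: "nat list"
    assume fg: "\<And>\<beta>. length \<beta> < length \<alpha> \<Longrightarrow> f \<beta> = g \<beta>"
    have "(\<Sum>i<length \<alpha>. f (take i \<alpha>) * \<phi> (drop i \<alpha>)) = (\<Sum>i<length \<alpha>. g (take i \<alpha>) * \<phi> (drop i \<alpha>))"
      by (intro sum.cong refl) (simp add: fg)
    then show "H f \<alpha> = H g \<alpha>" unfolding H_def by simp
  qed
  then obtain \<psi> where \<psi>: "\<And>\<alpha>. \<psi> \<alpha> = H \<psi> \<alpha>" by blast
  have func: "is_functional \<psi>" unfolding is_functional_def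
    using \<psi> by (simp add: H_def)
  have "conv \<psi> \<phi> \<alpha> = counit \<alpha>" for \<alpha>
  proof (cases "is_comp \<alpha>")
    case False then show ?thesis by (simp add: counit_nc)
  next
    case True
    have "conv \<psi> \<phi> \<alpha> = (\<Sum>i<Suc (length \<alpha>). \<psi> (take i \<alpha>) * \<phi> (drop i \<alpha>))"
      using True by (simp add: conv_def lessThan_Suc_atMost)
    also have "\<dots> = (\<Sum>i<length \<alpha>. \<psi> (take i \<alpha>) * \<phi> (drop i \<alpha>)) + \<psi> \<alpha>"
      using assms by simp
    also have "\<dots> = counit \<alpha>"
    proof (cases "\<alpha> = []")
      case True
      then show ?thesis using \<psi>[of "[]"] by (simp add: H_def)
    next
      case False
      have "\<psi> \<alpha> = - (\<Sum>i<length \<alpha>. \<psi> (take i \<alpha>) * \<phi> (drop i \<alpha>))"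
        using \<psi>[of \<alpha>] True False by (simp add: H_def)
      then show ?thesis using False by (simp add: counit_def)
    qed
    finally show ?thesis .
  qed
  then show ?thesis using func by blast
qed

lemma rinv_exists:
  fixes \<phi> :: "nat list \<Rightarrow> 'a::field"
  assumes "\<phi> [] = 1"
  shows "\<exists>\<psi>. is_functional \<psi> \<and> conv \<phi> \<psi> = counit"
proof -
  define H where "H \<psi> \<alpha> = (if is_comp \<alpha> then (if \<alpha> = [] then 1
      else - (\<Sum>i<length \<alpha>. \<phi> (take (Suc i) \<alpha>) * \<psi> (drop (Suc i) \<alpha>))) else 0)"
    for \<psi> :: "nat list \<Rightarrow> 'a" and \<alpha>
  have "\<exists>\<psi>. \<forall>\<alpha>. \<psi> \<alpha> = H \<psi> \<alpha>"
  proof (rule fix_exists[where s=length])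
    fix f g :: "nat list \<Rightarrow> 'a" and \<alpha> :: "nat list"
    assume fg: "\<And>\<beta>. length \<beta> < length \<alpha> \<Longrightarrow> f \<beta> = g \<beta>"
    have "(\<Sum>i<length \<alpha>. \<phi> (take (Suc i) \<alpha>) * f (drop (Suc i) \<alpha>)) = (\<Sum>i<length \<alpha>. \<phi> (take (Suc i) \<alpha>) * g (drop (Suc i) \<alpha>))"
      by (intro sum.cong refl) (simp add: fg)
    then show "H f \<alpha> = H g \<alpha>" unfolding H_def by simp
  qed
  then obtain \<psi> where \<psi>: "\<And>\<alpha>. \<psi> \<alpha> = H \<psi> \<alpha>" by blast
  have func: "is_functional \<psi>" unfolding is_functional_def
    using \<psi> by (simp add: H_def)
  have "conv \<phi> \<psi> \<alpha> = counit \<alpha>" for \<alpha>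
  proof (cases "is_comp \<alpha>")
    case False then show ?thesis by (simp add: counit_nc)
  next
    case True
    have "conv \<phi> \<psi> \<alpha> = \<phi> [] * \<psi> \<alpha> + (\<Sum>i<length \<alpha>. \<phi> (take (Suc i) \<alpha>) * \<psi> (drop (Suc i) \<alpha>))"
      using True by (simp add: conv_def sum.atMost_shift)
    also have "\<dots> = counit \<alpha>"
    proof (cases "\<alpha> = []")
      case True
      then show ?thesis using \<psi>[of "[]"] assms by (simp add: H_def)
    next
      case False
      have "\<psi> \<alpha> = - (\<Sum>i<length \<alpha>. \<phi> (take (Suc i) \<alpha>) * \<psi> (drop (Suc i) \<alpha>))"
        using \<psi>[of \<alpha>] True False by (simp add: H_def)
      then show ?thesis using False assms by (simp add: counit_def)
    qed
    finally show ?thesis .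
  qed
  then show ?thesis using func by blast
qed

lemma inv_exists:
  fixes \<phi> :: "nat list \<Rightarrow> 'a::field"
  assumes ch: "is_character \<phi>"
  shows "\<exists>\<psi>. is_character \<psi> \<and> conv \<phi> \<psi> = counit \<and> conv \<psi> \<phi> = counit"
proof -
  obtain L where L: "is_functional L" "conv L \<phi> = counit"
    using linv_exists[of \<phi>, OF char_Nil[OF ch]] by blast
  obtain R where R: "is_functional R" "conv \<phi> R = counit"
    using rinv_exists[of \<phi>, OF char_Nil[OF ch]] by blast
  have "L = conv L counit" using L(1) by (simp add: conv_counit_right)
  also have "\<dots> = conv L (conv \<phi> R)" using R(2) by simp
  also have "\<dots> = conv (conv L \<phi>) R" by (simp add: conv_assoc)
  also have "\<dots> = R" using L(2) R(1) by (simp add: conv_counit_left)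
  finally have LR: "L = R" .
  have L1: "L [] = 1"
    using fun_cong[OF L(2), of "[]"] char_Nil[OF ch] by (simp add: conv_Nil)
  have mult: "L \<alpha> * L \<beta> = (\<Sum>\<gamma>\<in>#qsh \<alpha> \<beta>. L \<gamma>)" if ab: "is_comp \<alpha>" "is_comp \<beta>" for \<alpha> \<beta>
  proof -
    have "Mx L \<alpha> \<beta> = tens L L \<alpha> \<beta>"
    proof (rule conv2_linv_unique[where Y="Mx \<phi>" and P="Mx L" and Q="tens L L"])
      show "Mx \<phi> [] [] = 1" using char_Nil[OF ch] by (simp add: Mx_Nil)
    next
      fix u v :: "nat list" assume uv: "is_comp u" "is_comp v"
      have "conv2 (Mx L) (Mx \<phi>) u v = Mx (conv L \<phi>) u v" using uv by (simp add: M_conv)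
      also have "\<dots> = counit u * counit v" using L(2) by (simp add: Mx_def qsh_counit)
      also have "\<dots> = conv L \<phi> u * conv L \<phi> v" using L(2) by simp
      also have "\<dots> = conv2 (tens L L) (tens \<phi> \<phi>) u v" using uv by (simp add: tens_conv)
      also have "\<dots> = conv2 (tens L L) (Mx \<phi>) u v"
        by (rule conv2_cong) (simp_all add: Mx_char[OF ch] uv)
      finally show "conv2 (Mx L) (Mx \<phi>) u v = conv2 (tens L L) (Mx \<phi>) u v" .
    qed (simp_all add: ab)
    then show ?thesis by (simp add: Mx_def tens_def)
  qed
  have "is_character L" using L(1) L1 mult by (simp add: is_character_def)
  then show ?thesis using L(2) R(2) LR by auto
qed

lemma inv_unique:
  assumes "is_functional \<psi>1" "conv \<psi>1 \<phi> = counit" "is_functional \<psi>2" "conv \<phi> \<psi>2 = counit"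
  shows "\<psi>1 = \<psi>2"
proof -
  have "\<psi>1 = conv \<psi>1 counit" using assms(1) by (simp add: conv_counit_right)
  also have "\<dots> = conv \<psi>1 (conv \<phi> \<psi>2)" using assms(4) by simp
  also have "\<dots> = conv (conv \<psi>1 \<phi>) \<psi>2" by (simp add: conv_assoc)
  also have "\<dots> = \<psi>2" using assms(2,3) by (simp add: conv_counit_left)
  finally show ?thesis .
qed

lemma char_inv:
  assumes ch: "is_character \<phi>"
  shows "is_character (char_inv \<phi>)" "conv \<phi> (char_inv \<phi>) = counit" "conv (char_inv \<phi>) \<phi> = counit"
proof -
  obtain \<psi> where \<psi>: "is_character \<psi>" "conv \<phi> \<psi> = counit" "conv \<psi> \<phi> = counit"
    using inv_exists[OF ch] by blast
  have "char_inv \<phi> = \<psi>" unfolding char_inv_def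
  proof (rule the_equality)
    show "is_character \<psi> \<and> conv \<phi> \<psi> = counit \<and> conv \<psi> \<phi> = counit" using \<psi> by simp
  next
    fix \<psi>' assume "is_character \<psi>' \<and> conv \<phi> \<psi>' = counit \<and> conv \<psi>' \<phi> = counit"
    then show "\<psi>' = \<psi>" using inv_unique[of \<psi>' \<phi> \<psi>] \<psi> by (simp add: char_functional)
  qed
  then show "is_character (char_inv \<phi>)" "conv \<phi> (char_inv \<phi>) = counit" "conv (char_inv \<phi>) \<phi> = counit"
    using \<psi> by simp_all
qed

lemma char_inv_eq:
  assumes "is_character \<phi>" "is_functional \<psi>" "conv \<phi> \<psi> = counit"
  shows "char_inv \<phi> = \<psi>"
  using inv_unique[of "char_inv \<phi>" \<phi> \<psi>] char_inv[OF assms(1)] assms(2,3)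
  by (simp add: char_functional)

lemma inv_inv: "is_character \<phi> \<Longrightarrow> char_inv (char_inv \<phi>) = \<phi>"
  by (rule char_inv_eq) (simp_all add: char_inv char_functional)

lemma inv_conv:
  assumes a: "is_character a" and b: "is_character b"
  shows "char_inv (conv a b) = conv (char_inv b) (char_inv a)"
proof (rule char_inv_eq)
  show "is_character (conv a b)" using a b by (rule char_conv)
  show "is_functional (conv (char_inv b) (char_inv a))" by simp
  have "conv (conv a b) (conv (char_inv b) (char_inv a)) = conv a (conv (conv b (char_inv b)) (char_inv a))"
    by (simp add: conv_assoc)
  also have "\<dots> = counit"
    using char_inv[OF a] char_inv[OF b] by (simp add: conv_counit_left char_functional)
  finally show "conv (conv a b) (conv (char_inv b) (char_inv a)) = counit" .
qed

lemma cancel_left: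
  assumes a: "is_character a" and x: "is_functional x" and y: "is_functional y"
    and eq: "conv a x = conv a y"
  shows "x = y"
proof -
  have "x = conv (conv (char_inv a) a) x" using char_inv[OF a] x by (simp add: conv_counit_left)
  also have "\<dots> = conv (char_inv a) (conv a y)" by (simp add: conv_assoc eq)
  also have "\<dots> = y" using char_inv[OF a] y by (simp add: conv_counit_left flip: conv_assoc)
  finally show ?thesis .
qed

lemma cancel_right:
  assumes a: "is_character a" and x: "is_functional x" and y: "is_functional y"
    and eq: "conv x a = conv y a"
  shows "x = y"
proof -
  have "x = conv x (conv a (char_inv a))" using char_inv[OF a] x by (simp add: conv_counit_right)
  also have "\<dots> = conv (conv y a) (char_inv a)" by (simp add: eq flip: conv_assoc)
  also have "\<dots> = y" using char_inv[OF a] y by (simp add: conv_counit_right conv_assoc)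
  finally show ?thesis .
qed


lemma sum_list_take_drop: "sum_list \<alpha> = sum_list (take i \<alpha>) + sum_list (drop i \<alpha>)"
  by (metis append_take_drop_id sum_list_append)

lemma bar_conv: "bar (conv a b) = conv (bar a) (bar b)"
proof
  fix \<alpha> :: "nat list"
  have "(-1::'a) ^ sum_list \<alpha> = (-1) ^ sum_list (take i \<alpha>) * (-1) ^ sum_list (drop i \<alpha>)" for i
    by (metis sum_list_take_drop power_add)
  then show "bar (conv a b) \<alpha> = conv (bar a) (bar b) \<alpha>"
    unfolding bar_def conv_def by (simp add: sum_distrib_left mult_ac)
qed

lemma bar_counit: "bar counit = counit"
  by (rule ext) (simp add: bar_def counit_def)

lemma bar_bar: "bar (bar a) = a"
proof
  fix \<alpha> :: "nat list"
  have "((-1::'a) ^ sum_list \<alpha>) * ((-1) ^ sum_list \<alpha>) = 1"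
    by (simp flip: power_add add: power_even_eq)
  then show "bar (bar a) \<alpha> = a \<alpha>" unfolding bar_def by (simp flip: mult.assoc)
qed

lemma bar_char:
  assumes a: "is_character a"
  shows "is_character (bar a)"
proof -
  have "bar a \<alpha> * bar a \<beta> = (\<Sum>\<gamma>\<in>#qsh \<alpha> \<beta>. bar a \<gamma>)" if "is_comp \<alpha>" "is_comp \<beta>" for \<alpha> \<beta>
  proof -
    have "(\<Sum>\<gamma>\<in>#qsh \<alpha> \<beta>. bar a \<gamma>) = (\<Sum>\<gamma>\<in>#qsh \<alpha> \<beta>. (-1) ^ (sum_list \<alpha> + sum_list \<beta>) * a \<gamma>)"
      unfolding bar_def by (rule arg_cong[where f=sum_mset], rule image_mset_cong) (simp add: qsh_sum)
    also have "\<dots> = (-1) ^ (sum_list \<alpha> + sum_list \<beta>) * (a \<alpha> * a \<beta>)"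
      using a that by (simp add: is_character_def sum_mset_distrib_left)
    finally show ?thesis by (simp add: bar_def power_add mult_ac)
  qed
  moreover have "is_functional (bar a)"
    using char_functional[OF a] by (simp add: is_functional_def bar_def)
  ultimately show ?thesis using char_Nil[OF a] by (simp add: is_character_def bar_def)
qed

lemma bar_inv:
  assumes a: "is_character a"
  shows "bar (char_inv a) = char_inv (bar a)"
proof -
  have "char_inv (bar a) = bar (char_inv a)"
  proof (rule char_inv_eq)
    show "is_character (bar a)" using a by (rule bar_char)
    show "is_functional (bar (char_inv a))"
      using bar_char[OF char_inv(1)[OF a]] by (rule char_functional)
    show "conv (bar a) (bar (char_inv a)) = counit"
      by (simp add: bar_conv[symmetric] char_inv(2)[OF a] bar_counit)
  qed
  then show ?thesis by simp
qed

definition Rv :: "(nat list \<Rightarrow> 'a) \<Rightarrow> nat list \<Rightarrow> 'a" where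
  "Rv \<phi> \<alpha> = \<phi> (rev \<alpha>)"

lemma sum_atMost_flip: "(\<Sum>i\<le>(n::nat). f (n - i)) = (\<Sum>i\<le>n. f i :: 'a::comm_monoid_add)"
  by (rule sum.reindex_bij_witness[where i="\<lambda>i. n - i" and j="\<lambda>i. n - i"]) auto

lemma Rv_conv: "Rv (conv a b) = conv (Rv b) (Rv a)"
proof
  fix \<alpha> :: "nat list"
  show "Rv (conv a b) \<alpha> = conv (Rv b) (Rv a) \<alpha>"
  proof (cases "is_comp \<alpha>")
    case False then show ?thesis by (simp add: Rv_def)
  next
    case True
    define n where "n = length \<alpha>"
    have "Rv (conv a b) \<alpha> = (\<Sum>i\<le>n. a (rev (drop (n - i) \<alpha>)) * b (rev (take (n - i) \<alpha>)))"
      using True by (simp add: Rv_def conv_def take_rev drop_rev n_def)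
    also have "\<dots> = (\<Sum>i\<le>n. a (rev (drop i \<alpha>)) * b (rev (take i \<alpha>)))"
      by (rule sum_atMost_flip[where f="\<lambda>i. a (rev (drop i \<alpha>)) * b (rev (take i \<alpha>))"])
    also have "\<dots> = conv (Rv b) (Rv a) \<alpha>"
      using True by (simp add: Rv_def conv_def n_def mult.commute)
    finally show ?thesis .
  qed
qed

lemma Rv_counit: "Rv counit = counit"
  by (rule ext) (simp add: Rv_def counit_def)

lemma Rv_bar: "Rv (bar a) = bar (Rv a)"
  by (rule ext) (simp add: Rv_def bar_def)

lemma Rv_zeta: "Rv zeta = zeta"
  by (rule ext) (simp add: Rv_def zeta_def)

lemma Rv_char:
  assumes a: "is_character a"
  shows "is_character (Rv a)"
proof -
  have "Rv a \<alpha> * Rv a \<beta> = (\<Sum>\<gamma>\<in>#qsh \<alpha> \<beta>. Rv a \<gamma>)" if "is_comp \<alpha>" "is_comp \<beta>" for \<alpha> \<beta>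
  proof -
    have "Rv a \<alpha> * Rv a \<beta> = (\<Sum>\<gamma>\<in>#qsh (rev \<alpha>) (rev \<beta>). a \<gamma>)"
      using a that by (simp add: Rv_def is_character_def)
    also have "\<dots> = (\<Sum>\<gamma>\<in>#qsh \<alpha> \<beta>. Rv a \<gamma>)"
      by (simp add: qsh_rev sum_mset_img Rv_def)
    finally show ?thesis .
  qed
  moreover have "is_functional (Rv a)"
    using char_functional[OF a] by (simp add: is_functional_def Rv_def)
  ultimately show ?thesis using char_Nil[OF a] by (simp add: is_character_def Rv_def)
qed

lemma Rv_inv:
  assumes a: "is_character a"
  shows "Rv (char_inv a) = char_inv (Rv a)"
proof -
  have "char_inv (Rv a) = Rv (char_inv a)"
  proof (rule char_inv_eq)
    show "is_character (Rv a)" using a by (rule Rv_char)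
    show "is_functional (Rv (char_inv a))"
      using Rv_char[OF char_inv(1)[OF a]] by (rule char_functional)
    show "conv (Rv a) (Rv (char_inv a)) = counit"
      by (simp add: Rv_conv[symmetric] char_inv(3)[OF a] Rv_counit)
  qed
  then show ?thesis by simp
qed

lemma qsh_len: "\<gamma> \<in># qsh u v \<Longrightarrow> length u \<le> length \<gamma> \<and> length v \<le> length \<gamma>"
proof (induction u v arbitrary: \<gamma> rule: qsh.induct)
  case (1 v)
  then show ?case by simp
next
  case (2 a u)
  then show ?case by simp
next
  case (3 a u b v)
  from 3(4) consider (A) x where "x \<in># qsh u (b#v)" "\<gamma> = a#x"
    | (B) x where "x \<in># qsh (a#u) v" "\<gamma> = b#x"
    | (C) x where "x \<in># qsh u v" "\<gamma> = (a+b)#x"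
    unfolding qsh.simps union_iff in_image_mset by blast
  then show ?case
  proof cases
    case A then show ?thesis using 3(1)[of x] by simp
  next
    case B then show ?thesis using 3(2)[of x] by simp
  next
    case C then show ?thesis using 3(3)[of x] by simp
  qed
qed

lemma zeta_char: "is_character (zeta :: nat list \<Rightarrow> 'a::field)"
proof -
  have "zeta \<alpha> * zeta \<beta> = (\<Sum>\<gamma>\<in>#qsh \<alpha> \<beta>. (zeta \<gamma> :: 'a))" if ab: "is_comp \<alpha>" "is_comp \<beta>" for \<alpha> \<beta>
  proof (cases "\<alpha> = [] \<or> \<beta> = []")
    case True
    then show ?thesis by (auto simp: zeta_def)
  next
    case False
    then obtain a u b v where au: "\<alpha> = a#u" and bv: "\<beta> = b#v"
      by (meson neq_Nil_conv)
    show ?thesis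
    proof (cases "u = [] \<and> v = []")
      case True
      then show ?thesis using ab by (simp add: au bv zeta_def)
    next
      case False
      have "zeta \<gamma> = (0::'a)" if "\<gamma> \<in># qsh \<alpha> \<beta>" for \<gamma>
      proof -
        have "2 \<le> length \<gamma>" using qsh_len[OF that] False by (cases u; cases v) (auto simp: au bv)
        then show ?thesis by (simp add: zeta_def)
      qed
      then have "(\<Sum>\<gamma>\<in>#qsh \<alpha> \<beta>. (zeta \<gamma> :: 'a)) = 0"
        by (simp add: sum_mset.neutral)
      moreover have "zeta \<alpha> * zeta \<beta> = (0::'a)"
        using False by (auto simp: zeta_def au bv)
      ultimately show ?thesis by simp
    qed
  qed
  then show ?thesis by (simp add: is_character_def is_functional_def zeta_def)
qed


definition DEC :: "(nat list \<Rightarrow> 'a::field) \<Rightarrow> (nat list \<Rightarrow> 'a) \<Rightarrow> (nat list \<Rightarrow> 'a) \<Rightarrow> bool" where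
  "DEC \<phi> p m \<longleftrightarrow> is_character p \<and> is_even p \<and> is_character m \<and> is_odd m \<and> \<phi> = conv p m"

lemma sqrt_exists:
  fixes \<chi> :: "nat list \<Rightarrow> 'a::field"
  assumes two: "(2::'a) \<noteq> 0" and ch: "is_character \<chi>"
  shows "\<exists>m. is_character m \<and> conv m m = \<chi>"
proof -
  define H where "H \<psi> \<alpha> = (if is_comp \<alpha> then (if \<alpha> = [] then 1
      else (\<chi> \<alpha> - (\<Sum>i<length \<alpha> - 1. \<psi> (take (Suc i) \<alpha>) * \<psi> (drop (Suc i) \<alpha>))) / 2) else 0)"
    for \<psi> :: "nat list \<Rightarrow> 'a" and \<alpha>
  have "\<exists>\<psi>. \<forall>\<alpha>. \<psi> \<alpha> = H \<psi> \<alpha>"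
  proof (rule fix_exists[where s=length])
    fix f g :: "nat list \<Rightarrow> 'a" and \<alpha> :: "nat list"
    assume fg: "\<And>\<beta>. length \<beta> < length \<alpha> \<Longrightarrow> f \<beta> = g \<beta>"
    have "(\<Sum>i<length \<alpha> - 1. f (take (Suc i) \<alpha>) * f (drop (Suc i) \<alpha>))
        = (\<Sum>i<length \<alpha> - 1. g (take (Suc i) \<alpha>) * g (drop (Suc i) \<alpha>))"
    proof (intro sum.cong refl)
      fix i assume "i \<in> {..<length \<alpha> - 1}"
      then have i: "Suc i < length \<alpha>" by simp
      have "f (take (Suc i) \<alpha>) = g (take (Suc i) \<alpha>)" by (rule fg) (use i in simp)
      moreover have "f (drop (Suc i) \<alpha>) = g (drop (Suc i) \<alpha>)" by (rule fg) (use i in simp)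
      ultimately show "f (take (Suc i) \<alpha>) * f (drop (Suc i) \<alpha>) = g (take (Suc i) \<alpha>) * g (drop (Suc i) \<alpha>)"
        by simp
    qed
    then show "H f \<alpha> = H g \<alpha>" unfolding H_def by simp
  qed
  then obtain m where m: "\<And>\<alpha>. m \<alpha> = H m \<alpha>" by blast
  have func: "is_functional m" unfolding is_functional_def using m by (simp add: H_def)
  have m1: "m [] = 1" using m[of "[]"] by (simp add: H_def)
  have sq: "conv m m = \<chi>"
  proof
    fix \<alpha> :: "nat list"
    show "conv m m \<alpha> = \<chi> \<alpha>"
    proof (cases "is_comp \<alpha>")
      case False
      then show ?thesis using char_functional[OF ch] by (simp add: functional_nc)
    next
      case True
      show ?thesis
      proof (cases \<alpha>)
        case Nil
        then show ?thesis using m1 char_Nil[OF ch] by (simp add: conv_Nil)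
      next
        case (Cons a w)
        define n where "n = length w"
        have len: "length \<alpha> = Suc n" using Cons n_def by simp
        define mid where "mid = (\<Sum>i<n. m (take (Suc i) \<alpha>) * m (drop (Suc i) \<alpha>))"
        have A: "conv m m \<alpha> = m [] * m \<alpha> + (\<Sum>i\<le>n. m (take (Suc i) \<alpha>) * m (drop (Suc i) \<alpha>))"
          using True len by (simp add: conv_def sum.atMost_Suc_shift del: sum.atMost_Suc)
        have B: "(\<Sum>i\<le>n. m (take (Suc i) \<alpha>) * m (drop (Suc i) \<alpha>)) = mid + m \<alpha> * m []"
          using len by (simp add: mid_def lessThan_Suc_atMost[symmetric])
        have C: "m \<alpha> = (\<chi> \<alpha> - mid) / 2"
          using m[of \<alpha>] True Cons len by (simp add: H_def mid_def)
        have "conv m m \<alpha> = 2 * m \<alpha> + mid" using A B m1 by simp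
        also have "\<dots> = \<chi> \<alpha>" unfolding C using two by (simp add: field_simps)
        finally show ?thesis .
      qed
    qed
  qed
  have mult: "m \<alpha> * m \<beta> = (\<Sum>\<gamma>\<in>#qsh \<alpha> \<beta>. m \<gamma>)" if ab: "is_comp \<alpha>" "is_comp \<beta>" for \<alpha> \<beta>
  proof -
    have "Mx m \<alpha> \<beta> = tens m m \<alpha> \<beta>"
    proof (rule conv2_sqrt_unique[where P="Mx m" and Q="tens m m", OF two])
      show "Mx m [] [] = 1" using m1 by (simp add: Mx_Nil)
      show "tens m m [] [] = 1" using m1 by (simp add: tens_def)
    next
      fix u v :: "nat list" assume uv: "is_comp u" "is_comp v"
      have "conv2 (Mx m) (Mx m) u v = Mx \<chi> u v" using uv by (simp add: M_conv[symmetric] sq)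
      also have "\<dots> = \<chi> u * \<chi> v" using Mx_char[OF ch uv] by (simp add: tens_def)
      also have "\<dots> = conv2 (tens m m) (tens m m) u v" using uv by (simp add: tens_conv sq)
      finally show "conv2 (Mx m) (Mx m) u v = conv2 (tens m m) (tens m m) u v" .
    qed (simp_all add: ab)
    then show ?thesis by (simp add: Mx_def tens_def)
  qed
  have "is_character m" using func m1 mult by (simp add: is_character_def)
  then show ?thesis using sq by blast
qed

lemma sqrt_unique1:
  fixes X Y :: "nat list \<Rightarrow> 'a::field"
  assumes two: "(2::'a) \<noteq> 0" and X: "is_functional X" "X [] = 1" and Y: "is_functional Y" "Y [] = 1"
    and eq: "conv X X = conv Y Y"
  shows "X = Y"
proof
  fix \<alpha> :: "nat list"
  show "X \<alpha> = Y \<alpha>"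
  proof (cases "is_comp \<alpha>")
    case False
    then show ?thesis using X Y by (simp add: functional_nc)
  next
    case True
    have "tens X counit \<alpha> [] = tens Y counit \<alpha> []"
    proof (rule conv2_sqrt_unique[where P="tens X counit" and Q="tens Y counit", OF two])
      show "tens X counit [] [] = 1" using X by (simp add: tens_def)
      show "tens Y counit [] [] = 1" using Y by (simp add: tens_def)
    next
      fix u v :: "nat list" assume uv: "is_comp u" "is_comp v"
      show "conv2 (tens X counit) (tens X counit) u v = conv2 (tens Y counit) (tens Y counit) u v"
        using uv by (simp add: tens_conv eq)
    qed (simp_all add: True)
    then show ?thesis by (simp add: tens_def)
  qed
qed

lemma dec_exists:
  fixes \<phi> :: "nat list \<Rightarrow> 'a::field"
  assumes two: "(2::'a) \<noteq> 0" and ch: "is_character \<phi>"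
  shows "\<exists>p m. DEC \<phi> p m"
proof -
  define b where "b = bar \<phi>"
  have chb: "is_character b" unfolding b_def using ch by (rule bar_char)
  define \<chi> where "\<chi> = conv (char_inv b) \<phi>"
  have ch\<chi>: "is_character \<chi>" unfolding \<chi>_def by (rule char_conv[OF char_inv(1)[OF chb] ch])
  obtain m where chm: "is_character m" and sq: "conv m m = \<chi>"
    using sqrt_exists[OF two ch\<chi>] by blast
  define im where "im = char_inv m"
  have chim: "is_character im" unfolding im_def using chm by (rule char_inv(1))
  have odd: "bar m = im"
  proof (rule sqrt_unique1[OF two])
    show "is_functional (bar m)" "bar m [] = 1" using bar_char[OF chm] by (simp_all add: char_functional char_Nil)
    show "is_functional im" "im [] = 1" using chim by (simp_all add: char_functional char_Nil)
    have "conv (bar m) (bar m) = bar \<chi>" by (simp add: bar_conv[symmetric] sq)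
    also have "\<dots> = conv (char_inv \<phi>) b"
    proof -
      have bb: "bar (char_inv b) = char_inv \<phi>" using bar_inv[OF chb] bar_bar[of \<phi>] b_def by simp
      show ?thesis unfolding \<chi>_def by (simp add: bar_conv bb b_def[symmetric])
    qed
    also have "\<dots> = char_inv \<chi>"
      unfolding \<chi>_def by (simp add: inv_conv[OF char_inv(1)[OF chb] ch] inv_inv[OF chb])
    also have "\<dots> = conv im im" unfolding im_def by (simp add: sq[symmetric] inv_conv[OF chm chm])
    finally show "conv (bar m) (bar m) = conv im im" .
  qed
  define p where "p = conv \<phi> im"
  have chp: "is_character p" unfolding p_def by (rule char_conv[OF ch chim])
  have phi_eq: "\<phi> = conv b (conv m m)"
  proof -
    have "conv b (conv m m) = conv (conv b (char_inv b)) \<phi>" unfolding sq \<chi>_def by (simp add: conv_assoc)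
    also have "\<dots> = \<phi>" using char_inv(2)[OF chb] ch by (simp add: conv_counit_left char_functional)
    finally show ?thesis by simp
  qed
  have mim: "conv m im = counit" unfolding im_def using chm by (rule char_inv(2))
  have imm: "conv im m = counit" unfolding im_def using chm by (rule char_inv(3))
  have even: "bar p = p"
  proof -
    have bim: "bar im = m" using odd bar_bar[of m] by simp
    have "bar p = conv b m" unfolding p_def by (simp add: bar_conv bim b_def)
    also have "\<dots> = conv b (conv m (conv m im))"
      using mim chm by (simp add: conv_counit_right char_functional)
    also have "\<dots> = p" unfolding p_def by (subst phi_eq) (simp add: conv_assoc)
    finally show ?thesis .
  qed
  have dec: "\<phi> = conv p m"
    unfolding p_def using imm ch by (simp add: conv_assoc conv_counit_right char_functional)
  have "DEC \<phi> p m"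
    unfolding DEC_def is_even_def is_odd_def using chp even chm odd dec im_def by simp
  then show ?thesis by blast
qed

lemma dec_sq:
  fixes \<phi> :: "nat list \<Rightarrow> 'a::field"
  assumes "DEC \<phi> p m"
  shows "conv m m = conv (char_inv (bar \<phi>)) \<phi>"
proof -
  have chp: "is_character p" and ev: "bar p = p" and chm: "is_character m"
    and od: "bar m = char_inv m" and ph: "\<phi> = conv p m"
    using assms by (simp_all add: DEC_def is_even_def is_odd_def)
  have "bar \<phi> = conv p (char_inv m)" by (simp add: ph bar_conv ev od)
  then have "char_inv (bar \<phi>) = conv m (char_inv p)"
    by (simp add: inv_conv[OF chp char_inv(1)[OF chm]] inv_inv[OF chm])
  then have "conv (char_inv (bar \<phi>)) \<phi> = conv m (conv (conv (char_inv p) p) m)"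
    by (simp add: ph conv_assoc)
  also have "\<dots> = conv m m" using char_inv(3)[OF chp] chm by (simp add: conv_counit_left char_functional)
  finally show ?thesis by simp
qed

lemma dec_unique:
  fixes \<phi> :: "nat list \<Rightarrow> 'a::field"
  assumes two: "(2::'a) \<noteq> 0" and d1: "DEC \<phi> p m" and d2: "DEC \<phi> p' m'"
  shows "p = p' \<and> m = m'"
proof -
  have chm: "is_character m" and chm': "is_character m'" and chp: "is_character p" and chp': "is_character p'"
    using d1 d2 by (simp_all add: DEC_def)
  have mm: "m = m'"
    by (rule sqrt_unique1[OF two]) (simp_all add: char_functional char_Nil chm chm' dec_sq[OF d1] dec_sq[OF d2])
  have "conv p m = conv p' m" using d1 d2 mm by (simp add: DEC_def)
  then have "p = p'" by (rule cancel_right[OF chm char_functional[OF chp] char_functional[OF chp']])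
  then show ?thesis using mm by simp
qed

lemma even_odd_part:
  fixes \<phi> :: "nat list \<Rightarrow> 'a::field"
  assumes two: "(2::'a) \<noteq> 0" and d: "DEC \<phi> p m"
  shows "even_part \<phi> = p" "odd_part \<phi> = m"
proof -
  show "even_part \<phi> = p" unfolding even_part_def
  proof (rule the_equality)
    show "is_character p \<and> is_even p \<and> (\<exists>m. is_character m \<and> is_odd m \<and> \<phi> = conv p m)"
      using d by (auto simp: DEC_def)
  next
    fix p' assume "is_character p' \<and> is_even p' \<and> (\<exists>m. is_character m \<and> is_odd m \<and> \<phi> = conv p' m)"
    then obtain m' where "DEC \<phi> p' m'" by (auto simp: DEC_def)
    then show "p' = p" using dec_unique[OF two d] by blast
  qed
  show "odd_part \<phi> = m" unfolding odd_part_def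
  proof (rule the_equality)
    show "is_character m \<and> is_odd m \<and> (\<exists>p. is_character p \<and> is_even p \<and> \<phi> = conv p m)"
      using d by (auto simp: DEC_def)
  next
    fix m' assume "is_character m' \<and> is_odd m' \<and> (\<exists>p. is_character p \<and> is_even p \<and> \<phi> = conv p m')"
    then obtain p' where "DEC \<phi> p' m'" by (auto simp: DEC_def)
    then show "m' = m" using dec_unique[OF two d] by blast
  qed
qed

lemma sum_take_le: "sum_list (take i \<alpha>) \<le> sum_list (\<alpha>::nat list)"
  using sum_list_take_drop[of \<alpha> i] by linarith

lemma sum_take_rev: "sum_list (take i (rev \<alpha>)) = sum_list \<alpha> - sum_list (take (length \<alpha> - i) (\<alpha>::nat list))"
proof -
  have "sum_list (take i (rev \<alpha>)) = sum_list (drop (length \<alpha> - i) \<alpha>)"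
    by (simp add: take_rev)
  also have "\<dots> = sum_list \<alpha> - sum_list (take (length \<alpha> - i) \<alpha>)"
    using sum_list_take_drop[of \<alpha> "length \<alpha> - i"] by simp
  finally show ?thesis .
qed

lemma psums_rev: "psums (rev \<alpha>) = (\<lambda>x. sum_list \<alpha> - x) ` psums \<alpha>"
proof (intro set_eqI iffI)
  fix x assume "x \<in> psums (rev \<alpha>)"
  then obtain i where i: "i \<le> length \<alpha>" "x = sum_list (take i (rev \<alpha>))"
    by (auto simp: psums_def)
  have "x = sum_list \<alpha> - sum_list (take (length \<alpha> - i) \<alpha>)" using i by (simp add: sum_take_rev)
  moreover have "sum_list (take (length \<alpha> - i) \<alpha>) \<in> psums \<alpha>"
    by (auto simp: psums_def)
  ultimately show "x \<in> (\<lambda>x. sum_list \<alpha> - x) ` psums \<alpha>" by blast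
next
  fix x assume "x \<in> (\<lambda>x. sum_list \<alpha> - x) ` psums \<alpha>"
  then obtain j where j: "j \<le> length \<alpha>" "x = sum_list \<alpha> - sum_list (take j \<alpha>)"
    by (auto simp: psums_def)
  have "sum_list (take (length \<alpha> - j) (rev \<alpha>)) = x" using j by (simp add: sum_take_rev)
  moreover have "length \<alpha> - j \<le> length (rev \<alpha>)" by simp
  ultimately show "x \<in> psums (rev \<alpha>)" unfolding psums_def by blast
qed

lemma psums_le: "x \<in> psums \<alpha> \<Longrightarrow> x \<le> sum_list \<alpha>"
  by (auto simp: psums_def sum_take_le)

lemma refines_rev: "refines (rev \<beta>) (rev \<alpha>) \<longleftrightarrow> refines \<beta> \<alpha>"
proof (cases "sum_list \<beta> = sum_list \<alpha>")
  case False
  then show ?thesis by (simp add: refines_def)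
next
  case True
  let ?S = "sum_list \<alpha>"
  have "(\<lambda>x. ?S - x) ` psums \<alpha> \<subseteq> (\<lambda>x. ?S - x) ` psums \<beta> \<longleftrightarrow> psums \<alpha> \<subseteq> psums \<beta>"
  proof
    assume H: "(\<lambda>x. ?S - x) ` psums \<alpha> \<subseteq> (\<lambda>x. ?S - x) ` psums \<beta>"
    show "psums \<alpha> \<subseteq> psums \<beta>"
    proof
      fix x assume x: "x \<in> psums \<alpha>"
      then have "?S - x \<in> (\<lambda>x. ?S - x) ` psums \<beta>" using H by blast
      then obtain y where y: "y \<in> psums \<beta>" "?S - x = ?S - y" by auto
      have "x \<le> ?S" using psums_le[OF x] .
      moreover have "y \<le> ?S" using psums_le[OF y(1)] True by simp
      ultimately have "x = y" using y(2) by linarith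
      then show "x \<in> psums \<beta>" using y by simp
    qed
  qed auto
  then show ?thesis using True by (simp add: refines_def psums_rev)
qed

lemma evalF_rev: "evalF \<phi> (rev \<alpha>) = evalF (Rv \<phi>) \<alpha>"
proof -
  have S: "{\<beta>. is_comp \<beta> \<and> refines \<beta> (rev \<alpha>)} = rev ` {\<beta>. is_comp \<beta> \<and> refines \<beta> \<alpha>}"
  proof (intro set_eqI iffI)
    fix \<beta> assume "\<beta> \<in> {\<beta>. is_comp \<beta> \<and> refines \<beta> (rev \<alpha>)}"
    then have "rev \<beta> \<in> {\<beta>. is_comp \<beta> \<and> refines \<beta> \<alpha>}"
      using refines_rev[of "rev \<beta>" \<alpha>] by simp
    then show "\<beta> \<in> rev ` {\<beta>. is_comp \<beta> \<and> refines \<beta> \<alpha>}"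
      by (intro image_eqI[of _ _ "rev \<beta>"]) simp_all
  next
    fix \<beta> assume "\<beta> \<in> rev ` {\<beta>. is_comp \<beta> \<and> refines \<beta> \<alpha>}"
    then obtain \<gamma> where "\<beta> = rev \<gamma>" "is_comp \<gamma>" "refines \<gamma> \<alpha>" by auto
    then show "\<beta> \<in> {\<beta>. is_comp \<beta> \<and> refines \<beta> (rev \<alpha>)}" by (simp add: refines_rev)
  qed
  have inj: "inj_on rev A" for A :: "nat list set" by (rule inj_onI) simp
  show ?thesis unfolding evalF_def S by (simp add: sum.reindex[OF inj] Rv_def comp_def)
qed

theorem proposition8p2:
  assumes "(2::'a::field) \<noteq> 0"
  shows "(\<forall>\<alpha>. is_comp \<alpha> \<longrightarrow>
            evalF (even_part (zeta :: nat list \<Rightarrow> 'a)) (rev \<alpha>) = evalF (even_part zeta) \<alpha>)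
       \<and> (\<forall>\<alpha>. is_comp \<alpha> \<longrightarrow>
            evalF (odd_part (zeta :: nat list \<Rightarrow> 'a)) (rev \<alpha>)
              = evalF (char_inv (odd_part (char_inv (zeta :: nat list \<Rightarrow> 'a)))) \<alpha>)"
proof -
  define z where "z = (zeta :: nat list \<Rightarrow> 'a)"
  have chz: "is_character z" unfolding z_def by (rule zeta_char)
  have Rz: "Rv z = z" unfolding z_def by (rule Rv_zeta)
  obtain p m where dec: "DEC z p m" using dec_exists[OF assms chz] by blast
  have chp: "is_character p" and evp: "bar p = p" and chm: "is_character m"
    and odm: "bar m = char_inv m" and zpm: "z = conv p m"
    using dec by (simp_all add: DEC_def is_even_def is_odd_def)
  have ep: "even_part z = p" and om: "odd_part z = m" using even_odd_part[OF assms dec] by auto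
  have chRp: "is_character (Rv p)" using chp by (rule Rv_char)
  have chRm: "is_character (Rv m)" using chm by (rule Rv_char)
  define q where "q = char_inv (Rv p)"
  define r where "r = char_inv (Rv m)"
  have chq: "is_character q" unfolding q_def using chRp by (rule char_inv(1))
  have chr: "is_character r" unfolding r_def using chRm by (rule char_inv(1))
  have zRR: "z = conv (Rv m) (Rv p)"
  proof -
    have "z = Rv z" using Rz by simp
    also have "\<dots> = conv (Rv m) (Rv p)" by (simp add: zpm Rv_conv)
    finally show ?thesis .
  qed
  have zinv: "char_inv z = conv q r"
    unfolding q_def r_def by (subst zRR) (rule inv_conv[OF chRm chRp])
  have evq: "bar q = q"
    unfolding q_def by (simp add: bar_inv[OF chRp] Rv_bar[symmetric] evp)
  have odr: "bar r = char_inv r"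
    unfolding r_def by (simp add: bar_inv[OF chRm] Rv_bar[symmetric] odm Rv_inv[OF chm])
  have decinv: "DEC (char_inv z) q r"
    unfolding DEC_def is_even_def is_odd_def using chq chr evq odr zinv by simp
  have "odd_part (char_inv z) = r" using even_odd_part[OF assms decinv] by simp
  then have C2: "char_inv (odd_part (char_inv z)) = Rv m"
    unfolding r_def using inv_inv[OF chRm] by simp
  have C1: "Rv p = p"
  proof -
    define X where "X = Rv p"
    have chX: "is_character X" unfolding X_def by (rule chRp)
    have evX: "bar X = X" unfolding X_def by (simp add: Rv_bar[symmetric] evp)
    define iz where "iz = char_inv z"
    have chiz: "is_character iz" unfolding iz_def using chz by (rule char_inv(1))
    have bz: "bar z = conv p (char_inv m)" by (simp add: zpm bar_conv evp odm)
    have iz_eq: "iz = conv (char_inv m) (char_inv p)" unfolding iz_def zpm by (rule inv_conv[OF chp chm])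
    have key: "conv (conv p iz) p = bar z"
    proof -
      have "conv (conv p iz) p = conv p (conv (char_inv m) (conv (char_inv p) p))"
        by (simp add: iz_eq conv_assoc)
      also have "\<dots> = bar z" using char_inv(3)[OF chp] char_inv(1)[OF chm]
        by (simp add: conv_counit_right char_functional bz)
      finally show ?thesis .
    qed
    have Riz: "Rv iz = iz" unfolding iz_def by (simp add: Rv_inv[OF chz] Rz)
    have Rbz: "Rv (bar z) = bar z" by (simp add: Rv_bar Rz)
    have keyX: "conv (conv X iz) X = bar z"
    proof -
      have "conv (conv X iz) X = Rv (conv (conv p iz) p)"
        unfolding X_def by (simp add: Rv_conv Riz conv_assoc)
      also have "\<dots> = bar z" by (simp add: key Rbz)
      finally show ?thesis .
    qed
    define m' where "m' = conv (char_inv X) z"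
    have chm': "is_character m'" unfolding m'_def by (rule char_conv[OF char_inv(1)[OF chX] chz])
    have bm': "bar m' = conv iz X"
    proof -
      have "bar m' = conv (char_inv X) (bar z)"
        unfolding m'_def by (simp add: bar_conv bar_inv[OF chX] evX)
      also have "\<dots> = conv (conv (char_inv X) X) (conv iz X)"
        by (simp add: keyX[symmetric] conv_assoc)
      also have "\<dots> = conv iz X" using char_inv(3)[OF chX] by (simp add: conv_counit_left)
      finally show ?thesis .
    qed
    have im': "char_inv m' = conv iz X"
      unfolding m'_def iz_def by (simp add: inv_conv[OF char_inv(1)[OF chX] chz] inv_inv[OF chX])
    have zX: "z = conv X m'"
      unfolding m'_def using char_inv(2)[OF chX] chz
      by (simp add: conv_assoc[symmetric] conv_counit_left char_functional)
    have "DEC z X m'"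
      unfolding DEC_def is_even_def is_odd_def using chX evX chm' bm' im' zX by simp
    then have "X = p" using dec_unique[OF assms _ dec] by blast
    then show ?thesis unfolding X_def .
  qed
  show ?thesis
    unfolding z_def[symmetric]
    by (simp add: evalF_rev ep om C1 C2)
qed

end
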